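(* Let $m,n\in\mathbb{N}$ and $(X,y,v)\in\mathbb{C}^{(mn\times mn)\cdot d}\times\mathbb{C}^{mn}\times\mathbb{C}^{mn}$. If $\|X\|_{\mathrm{col}}<\frac{1}{\sqrt n}$, then the linear functional $\ell_{X,y,v}$ defined on the orthonormal basis of $\mathscr{F}_n(\mathbb{C}^d)$ by $E_{\alpha,\beta}\star e_\omega\mapsto y^*\,E_{\alpha,\beta}\star e_\omega(X)\,v$ extends to a bounded linear functional on $\mathscr{F}_n(\mathbb{C}^d)$.
   Context: Equip $\mathbb{C}^{n\times n}$ with the Hilbert–Schmidt inner product and let $\mathscr{F}_n(\mathbb{C}^d)=\bigoplus_{\ell\ge0}\mathbb{C}^{n\times n}\otimes(\mathbb{C}^d\otimes\mathbb{C}^{n\times n})^{\otimes\ell}$ (Hilbert space tensor products). With $E_{i,j}$ the matrix units of $\mathbb{C}^{n\times n}$ and $e_1,\dots,e_d$ the standard basis of $\mathbb{C}^d$, for words $\alpha=a_0\cdots a_\ell,\beta=b_0\cdots b_\ell$ in letters $\{1,\dots,n\}$ and $\omega=w_1\cdots w_\ell$ in letters $\{1,\dots,d\}$ put $E_{\alpha,\beta}\star e_\omega=E_{a_0,b_0}\otimes e_{w_1}\otimes E_{a_1,b_1}\otimes\cdots\otimes e_{w_\ell}\otimes E_{a_\ell,b_\ell}$; these vectors ($\ell\ge0$) form an orthonormal basis of $\mathscr{F}_n(\mathbb{C}^d)$. For $X\in\mathbb{C}^{(mn\times mn)\cdot d}$ (column $d$-tuple of $mn\times mn$ matrices, $\|X\|_{\mathrm{col}}$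 the operator norm of the stacked $mnd\times mn$ matrix), the formal evaluation is $E_{\alpha,\beta}\star e_\omega(X)=(I_m\otimes E_{a_0,b_0})X_{w_1}(I_m\otimes E_{a_1,b_1})X_{w_2}\cdots X_{w_\ell}(I_m\otimes E_{a_\ell,b_\ell})\in\mathbb{C}^{mn\times mn}$. *)

theory Defs
  imports "HOL-Analysis.Analysis" "Jordan_Normal_Form.Matrix"
begin

text \<open>Matrix units E_{a,b} of C^{n x n} are 0-indexed: a, b < n.
  The block matrix I_m \<otimes> E_{a,b} in C^{mn x mn}, with the Kronecker convention
  that row index p*n + r corresponds to (p, r).\<close>
definition kron_unit :: "nat \<Rightarrow> nat \<Rightarrow> nat \<Rightarrow> nat \<Rightarrow> complex mat" where
  "kron_unit m n a b = mat (m*n) (m*n)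
     (\<lambda>(i,j). if i div n = j div n \<and> i mod n = a \<and> j mod n = b then 1 else 0)"

text \<open>Index set of the orthonormal basis E_{alpha,beta} * e_omega of F_n(C^d):
  triples (alpha, beta, omega) with |alpha| = |beta| = |omega| + 1, letters of alpha, beta
  in {0..<n}, letters of omega in {0..<d}.\<close>
definition fock_index :: "nat \<Rightarrow> nat \<Rightarrow> (nat list \<times> nat list \<times> nat list) set" where
  "fock_index n d = {(\<alpha>, \<beta>, \<omega>). length \<alpha> = Suc (length \<omega>) \<and> length \<beta> = Suc (length \<omega>)
      \<and> set \<alpha> \<subseteq> {..<n} \<and> set \<beta> \<subseteq> {..<n} \<and> set \<omega> \<subseteq> {..<d}}"

text \<open>Formal evaluation of E_{alpha,beta} * e_omega at the d-tuple X (a list of d matrices,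
  0-indexed).\<close>
fun word_eval :: "nat \<Rightarrow> nat \<Rightarrow> complex mat list \<Rightarrow> nat list \<Rightarrow> nat list \<Rightarrow> nat list \<Rightarrow> complex mat" where
  "word_eval m n X [a] [b] [] = kron_unit m n a b"
| "word_eval m n X (a # \<alpha>) (b # \<beta>) (w # \<omega>) =
     kron_unit m n a b * (X ! w) * word_eval m n X \<alpha> \<beta> \<omega>"
| "word_eval m n X _ _ _ = 0\<^sub>m (m*n) (m*n)"

definition vnorm2 :: "complex vec \<Rightarrow> real" where
  "vnorm2 u = (\<Sum>i<dim_vec u. (cmod (u $ i))\<^sup>2)"

text \<open>Column norm: operator norm of the stacked (mnd x mn) matrix.\<close>
definition col_norm :: "nat \<Rightarrow> nat \<Rightarrow> complex mat list \<Rightarrow> real" where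
  "col_norm m n X = Sup {sqrt (\<Sum>k<length X. vnorm2 ((X ! k) *\<^sub>v u)) | u.
      u \<in> carrier_vec (m*n) \<and> vnorm2 u \<le> 1}"

definition sesq :: "complex vec \<Rightarrow> complex mat \<Rightarrow> complex vec \<Rightarrow> complex" where
  "sesq y M v = (\<Sum>i<dim_vec y. cnj (y $ i) * ((M *\<^sub>v v) $ i))"

text \<open>The Hilbert space F_n(C^d), realised in coordinates w.r.t. its orthonormal basis
  as l^2 of the basis index set.\<close>
definition ell2_on :: "'i set \<Rightarrow> ('i \<Rightarrow> complex) set" where
  "ell2_on I = {f. (\<forall>x. x \<notin> I \<longrightarrow> f x = 0) \<and> (\<lambda>x. (cmod (f x))\<^sup>2) summable_on I}"

definition ell2_norm :: "'i set \<Rightarrow> ('i \<Rightarrow> complex) \<Rightarrow> real" where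
  "ell2_norm I f = sqrt (infsum (\<lambda>x. (cmod (f x))\<^sup>2) I)"

definition basis_vec :: "'i \<Rightarrow> 'i \<Rightarrow> complex" where
  "basis_vec b = (\<lambda>x. if x = b then 1 else 0)"

definition bounded_linear_functional_on :: "'i set \<Rightarrow> (('i \<Rightarrow> complex) \<Rightarrow> complex) \<Rightarrow> bool" where
  "bounded_linear_functional_on I L \<longleftrightarrow>
     (\<forall>f\<in>ell2_on I. \<forall>g\<in>ell2_on I. L (\<lambda>x. f x + g x) = L f + L g) \<and>
     (\<forall>c. \<forall>f\<in>ell2_on I. L (\<lambda>x. c * f x) = c * L f) \<and>
     (\<exists>K. \<forall>f\<in>ell2_on I. cmod (L f) \<le> K * ell2_norm I f)"

end

theory Submission
  imports Defs
begin

lemma ell2_functional: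
  fixes I :: "'i set" and c :: "'i \<Rightarrow> complex"
  assumes cs: "(\<lambda>x. (cmod (c x))\<^sup>2) summable_on I"
  shows "bounded_linear_functional_on I (\<lambda>f. infsum (\<lambda>x. f x * c x) I) \<and>
         (\<forall>b\<in>I. infsum (\<lambda>x. basis_vec b x * c x) I = c b)"
proof -
  define B where "B = infsum (\<lambda>x. (cmod (c x))\<^sup>2) I"
  have B0: "B \<ge> 0" unfolding B_def by (rule infsum_nonneg) simp
  have nsum: "(\<lambda>x. norm (f x * c x)) summable_on I" if f: "f \<in> ell2_on I" for f
  proof (rule summable_on_comparison_test)
    have fs: "(\<lambda>x. (cmod (f x))\<^sup>2) summable_on I" using f unfolding ell2_on_def by blast
    show "(\<lambda>x. (1/2) * ((cmod (f x))\<^sup>2 + (cmod (c x))\<^sup>2)) summable_on I"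
      by (intro summable_on_cmult_right summable_on_add fs cs)
    show "norm (f x * c x) \<le> (1/2) * ((cmod (f x))\<^sup>2 + (cmod (c x))\<^sup>2)" for x
    proof -
      have "0 \<le> (cmod (f x) - cmod (c x))\<^sup>2" by simp
      then show ?thesis by (simp add: norm_mult power2_eq_square algebra_simps)
    qed
  qed simp
  have fsum: "(\<lambda>x. f x * c x) summable_on I" if f: "f \<in> ell2_on I" for f
    by (rule abs_summable_summable[OF nsum[OF f]])
  have lin1: "\<forall>f\<in>ell2_on I. \<forall>g\<in>ell2_on I. infsum (\<lambda>x. (f x + g x) * c x) I
      = infsum (\<lambda>x. f x * c x) I + infsum (\<lambda>x. g x * c x) I"
    by (auto simp: distrib_right intro!: infsum_add fsum)
  have lin2: "\<forall>a. \<forall>f\<in>ell2_on I. infsum (\<lambda>x. (a * f x) * c x) I = a * infsum (\<lambda>x. f x * c x) I"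
    by (auto simp: mult.assoc intro!: infsum_cmult_right fsum)
  have bnd: "cmod (infsum (\<lambda>x. f x * c x) I) \<le> ((1 + B)/2) * ell2_norm I f" if f: "f \<in> ell2_on I" for f
  proof -
    have fs: "(\<lambda>x. (cmod (f x))\<^sup>2) summable_on I" using f unfolding ell2_on_def by blast
    define A where "A = infsum (\<lambda>x. (cmod (f x))\<^sup>2) I"
    have A0: "A \<ge> 0" unfolding A_def by (rule infsum_nonneg) simp
    define s where "s = sqrt A"
    have ns: "ell2_norm I f = s" unfolding s_def A_def ell2_norm_def by simp
    show ?thesis
    proof (cases "A = 0")
      case True
      have "f x = 0" if "x \<in> I" for x
      proof -
        have "(cmod (f x))\<^sup>2 = 0"
          by (rule nonneg_infsum_le_0D[OF _ fs _ that]) (use True A_def in auto)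
        then show ?thesis by simp
      qed
      then have "infsum (\<lambda>x. f x * c x) I = 0" by (intro infsum_0) simp
      then show ?thesis using ns B0 s_def A0 by simp
    next
      case False
      then have sp: "s > 0" using A0 s_def by simp
      have ss: "s * s = A" using A0 s_def by (simp add: real_sqrt_mult_self)
      have "cmod (infsum (\<lambda>x. f x * c x) I) \<le> infsum (\<lambda>x. norm (f x * c x)) I"
        by (rule norm_infsum_bound) (use nsum[OF f] in simp)
      also have "\<dots> \<le> infsum (\<lambda>x. (1 / (2 * s)) * (cmod (f x))\<^sup>2 + (s/2) * (cmod (c x))\<^sup>2) I"
      proof (rule infsum_mono)
        show "(\<lambda>x. norm (f x * c x)) summable_on I" by (rule nsum[OF f])
        show "(\<lambda>x. (1 / (2 * s)) * (cmod (f x))\<^sup>2 + (s/2) * (cmod (c x))\<^sup>2) summable_on I"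
          by (intro summable_on_cmult_right summable_on_add fs cs)
        fix x
        have "0 \<le> (cmod (f x) - s * cmod (c x))\<^sup>2" by simp
        then have "2 * s * (cmod (f x) * cmod (c x)) \<le> (cmod (f x))\<^sup>2 + s * s * (cmod (c x))\<^sup>2"
          by (simp add: power2_eq_square algebra_simps)
        then have "cmod (f x) * cmod (c x) \<le> ((cmod (f x))\<^sup>2 + s * s * (cmod (c x))\<^sup>2) / (2 * s)"
          using sp by (simp add: field_simps)
        also have "\<dots> = (1 / (2 * s)) * (cmod (f x))\<^sup>2 + (s/2) * (cmod (c x))\<^sup>2"
          using sp by (simp add: field_simps)
        finally show "norm (f x * c x) \<le> (1 / (2 * s)) * (cmod (f x))\<^sup>2 + (s/2) * (cmod (c x))\<^sup>2"
          by (simp add: norm_mult)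
      qed
      also have "\<dots> = (1 / (2 * s)) * A + (s/2) * B"
      proof -
        have e1: "infsum (\<lambda>x. (1 / (2 * s)) * (cmod (f x))\<^sup>2) I = (1 / (2 * s)) * A"
          unfolding A_def by (rule infsum_cmult_right) (rule fs)
        have e2: "infsum (\<lambda>x. (s/2) * (cmod (c x))\<^sup>2) I = (s/2) * B"
          unfolding B_def by (rule infsum_cmult_right) (rule cs)
        have "infsum (\<lambda>x. (1 / (2 * s)) * (cmod (f x))\<^sup>2 + (s/2) * (cmod (c x))\<^sup>2) I
           = infsum (\<lambda>x. (1 / (2 * s)) * (cmod (f x))\<^sup>2) I + infsum (\<lambda>x. (s/2) * (cmod (c x))\<^sup>2) I"
          by (rule infsum_add) (intro summable_on_cmult_right fs cs)+
        then show ?thesis using e1 e2 by simp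
      qed
      also have "\<dots> = ((1 + B)/2) * s"
        using sp ss[symmetric] by (simp add: field_simps)
      finally show ?thesis using ns by simp
    qed
  qed
  have basis: "infsum (\<lambda>x. basis_vec b x * c x) I = c b" if "b \<in> I" for b
  proof -
    have "infsum (\<lambda>x. basis_vec b x * c x) I = infsum (\<lambda>x. basis_vec b x * c x) {b}"
      by (rule infsum_cong_neutral) (use that in \<open>auto simp: basis_vec_def\<close>)
    then show ?thesis by (simp add: basis_vec_def)
  qed
  show ?thesis
    unfolding bounded_linear_functional_on_def
    using lin1 lin2 bnd basis by blast
qed

lemma sum_shift_aux: "(\<Sum>i\<in>{k..<k+(n::nat)}. f i) = (\<Sum>r<n. f (k+r))"
  by (induction n) simp_all

lemma sum_div_mod_reindex:
  fixes f :: "nat \<Rightarrow> 'a::comm_monoid_add"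
  shows "(\<Sum>i<m*n. f i) = (\<Sum>p<m. \<Sum>r<n. f (p*n + r))"
proof (induction m)
  case 0 then show ?case by simp
next
  case (Suc m)
  have "{..<Suc m * n} = {..<m*n} \<union> {m*n..<m*n+n}" by auto
  then have "(\<Sum>i<Suc m*n. f i) = (\<Sum>i<m*n. f i) + (\<Sum>i\<in>{m*n..<m*n+n}. f i)"
    by (simp add: sum.union_disjoint ivl_disj_int)
  also have "(\<Sum>i\<in>{m*n..<m*n+n}. f i) = (\<Sum>r<n. f (m*n + r))"
    by (rule sum_shift_aux)
  finally show ?case using Suc by simp
qed

lemma cs_complex:
  fixes a b :: "nat \<Rightarrow> complex"
  shows "(cmod (\<Sum>i<N. cnj (a i) * b i))\<^sup>2 \<le> (\<Sum>i<N. (cmod (a i))\<^sup>2) * (\<Sum>i<N. (cmod (b i))\<^sup>2)"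
proof -
  have "cmod (\<Sum>i<N. cnj (a i) * b i) \<le> (\<Sum>i<N. cmod (a i) * cmod (b i))"
    by (rule order_trans[OF norm_sum]) (simp add: norm_mult)
  then have "(cmod (\<Sum>i<N. cnj (a i) * b i))\<^sup>2 \<le> (\<Sum>i<N. cmod (a i) * cmod (b i))\<^sup>2"
    by (rule power_mono) simp
  also have "\<dots> \<le> (\<Sum>i<N. (cmod (a i))\<^sup>2) * (\<Sum>i<N. (cmod (b i))\<^sup>2)"
    by (rule Cauchy_Schwarz_ineq_sum)
  finally show ?thesis .
qed

lemma sesq_bound:
  assumes "dim_vec y = dim_row M"
  shows "(cmod (sesq y M u))\<^sup>2 \<le> vnorm2 y * vnorm2 (M *\<^sub>v u)"
  unfolding sesq_def vnorm2_def using assms cs_complex by simp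

lemma vnorm2_nonneg: "vnorm2 u \<ge> 0"
  unfolding vnorm2_def by (simp add: sum_nonneg)

lemma kron_unit_carrier[simp]: "kron_unit m n a b \<in> carrier_mat (m*n) (m*n)"
  unfolding kron_unit_def by simp

lemma dim_kron_unit[simp]: "dim_row (kron_unit m n a b) = m*n" "dim_col (kron_unit m n a b) = m*n"
  unfolding kron_unit_def by simp_all

lemma kron_unit_apply:
  assumes u: "u \<in> carrier_vec (m*n)" and a: "a < n" and b: "b < n" and i: "i < m*n"
  shows "(kron_unit m n a b *\<^sub>v u) $ i = (if i mod n = a then u $ ((i div n)*n + b) else 0)"
proof -
  have j0: "(i div n)*n + b < m*n"
  proof -
    have "i div n < m" using i by (simp add: less_mult_imp_div_less)
    then have "Suc (i div n) \<le> m" by simp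
    then have "Suc (i div n) * n \<le> m * n" by (rule mult_le_mono1)
    then show ?thesis using b by simp
  qed
  have eq: "(i div n = j div n \<and> i mod n = a \<and> j mod n = b) \<longleftrightarrow> (i mod n = a \<and> j = (i div n)*n + b)" for j
  proof
    assume "i div n = j div n \<and> i mod n = a \<and> j mod n = b"
    then show "i mod n = a \<and> j = (i div n)*n + b" by (metis div_mult_mod_eq)
  next
    assume "i mod n = a \<and> j = (i div n)*n + b"
    then show "i div n = j div n \<and> i mod n = a \<and> j mod n = b" using b by simp
  qed
  have "(kron_unit m n a b *\<^sub>v u) $ i =
     (\<Sum>j<m*n. (if i div n = j div n \<and> i mod n = a \<and> j mod n = b then 1 else 0) * u $ j)"
    using i u unfolding kron_unit_def
    by (simp add: scalar_prod_def lessThan_atLeast0)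
  also have "\<dots> = (\<Sum>j<m*n. if i mod n = a then (if j = (i div n)*n + b then u $ j else 0) else 0)"
    by (intro sum.cong refl) (simp only: eq, auto)
  also have "\<dots> = (if i mod n = a then u $ ((i div n)*n + b) else 0)"
    using j0 by simp
  finally show ?thesis .
qed

lemma kron_sum:
  assumes u: "u \<in> carrier_vec (m*n)"
  shows "(\<Sum>a<n. \<Sum>b<n. vnorm2 (kron_unit m n a b *\<^sub>v u)) = real n * vnorm2 u"
proof -
  have "(\<Sum>a<n. \<Sum>b<n. vnorm2 (kron_unit m n a b *\<^sub>v u))
     = (\<Sum>a<n. \<Sum>b<n. \<Sum>i<m*n. if i mod n = a then (cmod (u $ ((i div n)*n + b)))\<^sup>2 else 0)"
  proof -
    have pt: "vnorm2 (kron_unit m n a b *\<^sub>v u) =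
      (\<Sum>i<m * n. if i mod n = a then (cmod (u $ (i div n * n + b)))\<^sup>2 else 0)"
      if a: "a < n" and b: "b < n" for a b
      unfolding vnorm2_def
    proof (intro sum.cong)
      show "{..<dim_vec (kron_unit m n a b *\<^sub>v u)} = {..<m*n}" by simp
      fix i assume "i \<in> {..<m*n}"
      then show "(cmod ((kron_unit m n a b *\<^sub>v u) $ i))\<^sup>2 =
          (if i mod n = a then (cmod (u $ (i div n * n + b)))\<^sup>2 else 0)"
        using kron_unit_apply[OF u a b, of i] by simp
    qed
    show ?thesis by (intro sum.cong refl) (simp add: pt)
  qed
  also have "\<dots> = (\<Sum>b<n. \<Sum>a<n. \<Sum>i<m*n. if i mod n = a then (cmod (u $ ((i div n)*n + b)))\<^sup>2 else 0)"
    by (rule sum.swap)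
  also have "\<dots> = (\<Sum>b<n. \<Sum>i<m*n. \<Sum>a<n. if i mod n = a then (cmod (u $ ((i div n)*n + b)))\<^sup>2 else 0)"
    by (rule sum.cong[OF refl], rule sum.swap)
  also have "\<dots> = (\<Sum>b<n. \<Sum>i<m*n. (cmod (u $ ((i div n)*n + b)))\<^sup>2)"
  proof (intro sum.cong refl)
    fix b i assume "i \<in> {..<m*n}"
    then have "n > 0" by (cases n) auto
    then have "i mod n \<in> {..<n}" by simp
    then show "(\<Sum>a<n. if i mod n = a then (cmod (u $ ((i div n)*n + b)))\<^sup>2 else 0)
       = (cmod (u $ ((i div n)*n + b)))\<^sup>2"
      by (simp add: sum.delta)
  qed
  also have "\<dots> = (\<Sum>i<m*n. \<Sum>b<n. (cmod (u $ ((i div n)*n + b)))\<^sup>2)"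
    by (rule sum.swap)
  also have "\<dots> = (\<Sum>p<m. \<Sum>r<n. \<Sum>b<n. (cmod (u $ (p*n + b)))\<^sup>2)"
    by (subst sum_div_mod_reindex) simp
  also have "\<dots> = (\<Sum>p<m. real n * (\<Sum>b<n. (cmod (u $ (p*n + b)))\<^sup>2))"
    by simp
  also have "\<dots> = real n * (\<Sum>i<m*n. (cmod (u $ i))\<^sup>2)"
    by (simp add: sum_div_mod_reindex sum_distrib_left)
  also have "\<dots> = real n * vnorm2 u" using u by (simp add: vnorm2_def)
  finally show ?thesis .
qed

lemma vnorm2_smult: "vnorm2 (k \<cdot>\<^sub>v w) = (cmod k)\<^sup>2 * vnorm2 w"
  unfolding vnorm2_def by (simp add: norm_mult power_mult_distrib sum_distrib_left)

lemma vnorm2_le1_entry: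
  fixes u :: "complex vec"
  assumes "vnorm2 u \<le> 1" "j < dim_vec u"
  shows "cmod (u $ j) \<le> 1"
proof -
  have "(cmod (u $ j))\<^sup>2 \<le> vnorm2 u"
    unfolding vnorm2_def by (rule member_le_sum) (use assms in auto)
  then have "(cmod (u $ j))\<^sup>2 \<le> 1\<^sup>2" using assms by simp
  then show ?thesis by (rule power2_le_imp_le) simp
qed

lemma mat_vec_entry_bound:
  fixes A :: "complex mat"
  assumes A: "A \<in> carrier_mat N N" and u: "u \<in> carrier_vec N" and u1: "vnorm2 u \<le> 1"
    and i: "i < N"
  shows "cmod ((A *\<^sub>v u) $ i) \<le> (\<Sum>j<N. cmod (A $$ (i,j)))"
proof -
  have "(A *\<^sub>v u) $ i = (\<Sum>j<N. A $$ (i,j) * u $ j)"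
    using A u i by (simp add: scalar_prod_def lessThan_atLeast0)
  also have "cmod \<dots> \<le> (\<Sum>j<N. cmod (A $$ (i,j) * u $ j))" by (rule norm_sum)
  also have "\<dots> \<le> (\<Sum>j<N. cmod (A $$ (i,j)))"
  proof (rule sum_mono)
    fix j assume "j \<in> {..<N}"
    then have "cmod (u $ j) \<le> 1" using vnorm2_le1_entry[OF u1] u by simp
    then show "cmod (A $$ (i,j) * u $ j) \<le> cmod (A $$ (i,j))"
      by (simp add: norm_mult mult_left_le)
  qed
  finally show ?thesis .
qed

lemma vnorm2_zero_mat_vec:
  fixes A :: "complex mat"
  assumes A: "A \<in> carrier_mat N N" and u: "u \<in> carrier_vec N" and z: "vnorm2 u = 0"
  shows "vnorm2 (A *\<^sub>v u) = 0"
proof -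
  have "(cmod (u $ j))\<^sup>2 = 0" if "j < N" for j
    using z u that unfolding vnorm2_def by (subst (asm) sum_nonneg_eq_0_iff) auto
  then have uz: "u $ j = 0" if "j < N" for j using that by simp
  have "(A *\<^sub>v u) $ i = 0" if "i < N" for i
    using A u that uz by (simp add: scalar_prod_def)
  then show ?thesis using A unfolding vnorm2_def by simp
qed

lemma col_norm_props:
  fixes X :: "complex mat list"
  assumes X: "\<forall>k<length X. X ! k \<in> carrier_mat (m*n) (m*n)"
  shows "col_norm m n X \<ge> 0"
    and "\<And>u. u \<in> carrier_vec (m*n) \<Longrightarrow>
          (\<Sum>k<length X. vnorm2 ((X ! k) *\<^sub>v u)) \<le> (col_norm m n X)\<^sup>2 * vnorm2 u"
proof -
  define N where "N = m*n"
  define S where "S = {sqrt (\<Sum>k<length X. vnorm2 ((X ! k) *\<^sub>v u)) | u.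
      u \<in> carrier_vec (m*n) \<and> vnorm2 u \<le> 1}"
  have cS: "col_norm m n X = Sup S" unfolding S_def col_norm_def by simp
  define Bd where "Bd = sqrt (\<Sum>k<length X. \<Sum>i<N. (\<Sum>j<N. cmod ((X!k) $$ (i,j)))\<^sup>2)"
  have bdd: "bdd_above S"
  proof (rule bdd_aboveI)
    fix s assume "s \<in> S"
    then obtain u where s: "s = sqrt (\<Sum>k<length X. vnorm2 ((X ! k) *\<^sub>v u))"
      and u: "u \<in> carrier_vec N" and u1: "vnorm2 u \<le> 1" unfolding S_def N_def by blast
    have "(\<Sum>k<length X. vnorm2 ((X ! k) *\<^sub>v u)) \<le> (\<Sum>k<length X. \<Sum>i<N. (\<Sum>j<N. cmod ((X!k) $$ (i,j)))\<^sup>2)"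
    proof (rule sum_mono)
      fix k assume k: "k \<in> {..<length X}"
      then have Xk: "X!k \<in> carrier_mat N N" using X N_def by simp
      show "vnorm2 ((X ! k) *\<^sub>v u) \<le> (\<Sum>i<N. (\<Sum>j<N. cmod ((X!k) $$ (i,j)))\<^sup>2)"
        unfolding vnorm2_def dim_mult_mat_vec carrier_matD(1)[OF Xk]
      proof (rule sum_mono)
        fix i assume "i \<in> {..<N}"
        then show "(cmod ((X ! k *\<^sub>v u) $ i))\<^sup>2 \<le> (\<Sum>j<N. cmod (X ! k $$ (i, j)))\<^sup>2"
          by (intro power_mono mat_vec_entry_bound[OF Xk u u1]) auto
      qed
    qed
    then show "s \<le> Bd" unfolding s Bd_def by simp
  qed
  have upper: "sqrt (\<Sum>k<length X. vnorm2 ((X ! k) *\<^sub>v u)) \<le> col_norm m n X"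
    if "u \<in> carrier_vec (m*n)" "vnorm2 u \<le> 1" for u
    unfolding cS by (rule cSup_upper[OF _ bdd]) (use that S_def in blast)
  have z: "0\<^sub>v (m*n) \<in> carrier_vec (m*n)" "vnorm2 (0\<^sub>v (m*n)) \<le> 1"
    by (auto simp: vnorm2_def)
  from upper[OF z] show c0: "col_norm m n X \<ge> 0"
    by (rule order_trans[rotated]) (simp add: sum_nonneg vnorm2_nonneg)
  fix u :: "complex vec" assume u: "u \<in> carrier_vec (m*n)"
  define t where "t = vnorm2 u"
  have t0: "t \<ge> 0" unfolding t_def by (rule vnorm2_nonneg)
  show "(\<Sum>k<length X. vnorm2 ((X ! k) *\<^sub>v u)) \<le> (col_norm m n X)\<^sup>2 * vnorm2 u"
  proof (cases "t = 0")
    case True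
    then have "(\<Sum>k<length X. vnorm2 ((X ! k) *\<^sub>v u)) = 0"
      using vnorm2_zero_mat_vec[OF _ u] X t_def by simp
    then show ?thesis by (simp add: vnorm2_nonneg)
  next
    case False
    then have tp: "t > 0" using t0 by simp
    define u' where "u' = complex_of_real (1 / sqrt t) \<cdot>\<^sub>v u"
    have u'c: "u' \<in> carrier_vec (m*n)" unfolding u'_def using u by simp
    have sc: "(cmod (complex_of_real (1 / sqrt t)))\<^sup>2 = 1 / t"
    proof -
      have "cmod (complex_of_real (1 / sqrt t)) = 1 / sqrt t"
        by (subst norm_of_real) (use tp in simp)
      then show ?thesis using tp by (simp add: power_divide)
    qed
    have u'1: "vnorm2 u' = 1" unfolding u'_def vnorm2_smult sc t_def[symmetric] using tp by simp
    have "vnorm2 ((X ! k) *\<^sub>v u') = vnorm2 ((X ! k) *\<^sub>v u) / t" if "k < length X" for k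
    proof -
      have "(X ! k) *\<^sub>v u' = complex_of_real (1 / sqrt t) \<cdot>\<^sub>v ((X ! k) *\<^sub>v u)"
        unfolding u'_def by (rule mult_mat_vec) (use X that u in auto)
      then show ?thesis by (simp only: vnorm2_smult sc) simp
    qed
    then have "(\<Sum>k<length X. vnorm2 ((X ! k) *\<^sub>v u')) = (\<Sum>k<length X. vnorm2 ((X ! k) *\<^sub>v u)) / t"
      by (simp add: sum_divide_distrib)
    with upper[OF u'c] u'1 have "sqrt ((\<Sum>k<length X. vnorm2 ((X ! k) *\<^sub>v u)) / t) \<le> col_norm m n X"
      by simp
    then have "(sqrt ((\<Sum>k<length X. vnorm2 ((X ! k) *\<^sub>v u)) / t))\<^sup>2 \<le> (col_norm m n X)\<^sup>2"
      by (rule power_mono) (use tp in \<open>simp add: sum_nonneg vnorm2_nonneg\<close>)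
    moreover have "(\<Sum>k<length X. vnorm2 ((X ! k) *\<^sub>v u)) \<ge> 0" by (simp add: sum_nonneg vnorm2_nonneg)
    ultimately have "(\<Sum>k<length X. vnorm2 ((X ! k) *\<^sub>v u)) / t \<le> (col_norm m n X)\<^sup>2"
      using tp by simp
    then show ?thesis using tp t_def by (simp add: field_simps)
  qed
qed

lemma we_carrier:
  assumes XC: "\<forall>k<length X. X ! k \<in> carrier_mat (m*n) (m*n)"
    and "set \<omega> \<subseteq> {..<length X}"
  shows "word_eval m n X \<alpha> \<beta> \<omega> \<in> carrier_mat (m*n) (m*n)"
  using assms
proof (induction m n X \<alpha> \<beta> \<omega> rule: word_eval.induct)
  case (2 m n X a \<alpha> b \<beta> w \<omega>)
  then have "X ! w \<in> carrier_mat (m*n) (m*n)" by auto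
  with 2 show ?case by (auto intro!: mult_carrier_mat)
qed auto

lemma we_snoc:
  assumes XC: "\<forall>k<length X. X ! k \<in> carrier_mat (m*n) (m*n)"
    and w: "w < length X"
  shows "set \<omega> \<subseteq> {..<length X} \<Longrightarrow> length \<alpha> = Suc (length \<omega>) \<Longrightarrow> length \<beta> = Suc (length \<omega>) \<Longrightarrow>
    word_eval m n X (\<alpha>@[a]) (\<beta>@[b]) (\<omega>@[w]) = word_eval m n X \<alpha> \<beta> \<omega> * X!w * kron_unit m n a b"
proof (induction \<omega> arbitrary: \<alpha> \<beta>)
  case Nil
  then obtain a0 b0 where "\<alpha> = [a0]" "\<beta> = [b0]" by (auto simp: length_Suc_conv)
  then show ?case by simp
next
  case (Cons w0 \<omega>)
  from Cons.prems obtain a0 \<alpha>' b0 \<beta>' where ab: "\<alpha> = a0 # \<alpha>'" "\<beta> = b0 # \<beta>'"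
    and l: "length \<alpha>' = Suc (length \<omega>)" "length \<beta>' = Suc (length \<omega>)"
    by (auto simp: length_Suc_conv)
  have so: "set \<omega> \<subseteq> {..<length X}" and w0: "w0 < length X" using Cons.prems by auto
  define N where "N = m*n"
  have K0: "kron_unit m n a0 b0 \<in> carrier_mat N N" and K: "kron_unit m n a b \<in> carrier_mat N N"
    unfolding N_def by simp_all
  have X0: "X!w0 \<in> carrier_mat N N" and Xw: "X!w \<in> carrier_mat N N" using XC w w0 N_def by auto
  have W: "word_eval m n X \<alpha>' \<beta>' \<omega> \<in> carrier_mat N N" using we_carrier[OF XC so] N_def by simp
  have "word_eval m n X (\<alpha>@[a]) (\<beta>@[b]) ((w0#\<omega>)@[w]) =
     kron_unit m n a0 b0 * X!w0 * (word_eval m n X \<alpha>' \<beta>' \<omega> * X!w * kron_unit m n a b)"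
    using Cons.IH[OF so l] ab by simp
  also have "\<dots> = (kron_unit m n a0 b0 * X!w0 * word_eval m n X \<alpha>' \<beta>' \<omega>) * X!w * kron_unit m n a b"
  proof -
    let ?P = "kron_unit m n a0 b0 * X!w0" and ?W = "word_eval m n X \<alpha>' \<beta>' \<omega>"
    have P: "?P \<in> carrier_mat N N" using K0 X0 by simp
    have "?P * ?W * X!w = ?P * (?W * X!w)" by (rule assoc_mult_mat[OF P W Xw])
    moreover have "?P * (?W * X!w) * kron_unit m n a b = ?P * (?W * X!w * kron_unit m n a b)"
      by (rule assoc_mult_mat[OF P _ K]) (use W Xw in simp)
    ultimately show ?thesis by simp
  qed
  also have "\<dots> = word_eval m n X \<alpha> \<beta> (w0#\<omega>) * X!w * kron_unit m n a b" using ab by simp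
  finally show ?case .
qed

lemma sesq_assoc3:
  assumes "W \<in> carrier_mat N N" "A \<in> carrier_mat N N" "K \<in> carrier_mat N N" "u \<in> carrier_vec N"
  shows "sesq y (W * A * K) u = sesq y W (A *\<^sub>v (K *\<^sub>v u))"
proof -
  have "(W * A * K) *\<^sub>v u = W *\<^sub>v (A *\<^sub>v (K *\<^sub>v u))"
    using assms by (simp add: assoc_mult_mat_vec[of _ N N _ N])
  then show ?thesis unfolding sesq_def by simp
qed

definition Idx :: "nat \<Rightarrow> nat \<Rightarrow> nat \<Rightarrow> (nat list \<times> nat list \<times> nat list) set" where
  "Idx n d l = {t \<in> fock_index n d. length (snd (snd t)) = l}"

lemma idx0: "Idx n d 0 = (\<lambda>(a,b). ([a],[b],[])) ` ({..<n}\<times>{..<n})"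
  unfolding Idx_def fock_index_def by (auto simp: length_Suc_conv)

definition snoc3 :: "(nat list \<times> nat list \<times> nat list) \<times> (nat \<times> nat \<times> nat) \<Rightarrow> nat list \<times> nat list \<times> nat list" where
  "snoc3 p = (case p of ((\<alpha>,\<beta>,\<omega>),(a,b,w)) \<Rightarrow> (\<alpha>@[a], \<beta>@[b], \<omega>@[w]))"

lemma snoc3_inj: "inj snoc3"
  unfolding inj_def snoc3_def by auto

lemma idxSuc: "Idx n d (Suc l) = snoc3 ` (Idx n d l \<times> ({..<n}\<times>{..<n}\<times>{..<d}))"
proof
  show "snoc3 ` (Idx n d l \<times> ({..<n}\<times>{..<n}\<times>{..<d})) \<subseteq> Idx n d (Suc l)"
    unfolding Idx_def fock_index_def snoc3_def by auto
next
  show "Idx n d (Suc l) \<subseteq> snoc3 ` (Idx n d l \<times> ({..<n}\<times>{..<n}\<times>{..<d}))"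
  proof
    fix t assume t: "t \<in> Idx n d (Suc l)"
    obtain \<alpha> \<beta> \<omega> where tt: "t = (\<alpha>,\<beta>,\<omega>)" by (cases t) auto
    from t tt have l: "length \<alpha> = Suc (Suc l)" "length \<beta> = Suc (Suc l)" "length \<omega> = Suc l"
      and s: "set \<alpha> \<subseteq> {..<n}" "set \<beta> \<subseteq> {..<n}" "set \<omega> \<subseteq> {..<d}"
      unfolding Idx_def fock_index_def by auto
    obtain \<alpha>' a where a: "\<alpha> = \<alpha>'@[a]" using l(1) by (metis length_0_conv nat.distinct(1) rev_exhaust)
    obtain \<beta>' b where b: "\<beta> = \<beta>'@[b]" using l(2) by (metis length_0_conv nat.distinct(1) rev_exhaust)
    obtain \<omega>' w where w: "\<omega> = \<omega>'@[w]" using l(3) by (metis length_0_conv nat.distinct(1) rev_exhaust)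
    have "((\<alpha>',\<beta>',\<omega>'),(a,b,w)) \<in> Idx n d l \<times> ({..<n}\<times>{..<n}\<times>{..<d})"
      using l s a b w unfolding Idx_def fock_index_def by auto
    moreover have "t = snoc3 ((\<alpha>',\<beta>',\<omega>'),(a,b,w))" using tt a b w by (simp add: snoc3_def)
    ultimately show "t \<in> snoc3 ` (Idx n d l \<times> ({..<n}\<times>{..<n}\<times>{..<d}))" by blast
  qed
qed

lemma finite_Idx: "finite (Idx n d l)"
  by (induction l) (simp_all add: idx0 idxSuc)

definition we3 :: "nat \<Rightarrow> nat \<Rightarrow> complex mat list \<Rightarrow> nat list \<times> nat list \<times> nat list \<Rightarrow> complex mat" where
  "we3 m n X t = (case t of (\<alpha>,\<beta>,\<omega>) \<Rightarrow> word_eval m n X \<alpha> \<beta> \<omega>)"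

lemma sum_prod3:
  fixes h :: "nat \<times> nat \<times> nat \<Rightarrow> real"
  shows "(\<Sum>q\<in>{..<n}\<times>{..<n}\<times>{..<d}. h q) = (\<Sum>a<n. \<Sum>b<n. \<Sum>w<d. h (a,b,w))"
  by (simp add: sum.cartesian_product)

lemma sum_prod2:
  fixes g :: "'a \<times> 'b \<Rightarrow> real"
  shows "(\<Sum>p\<in>A\<times>B. g p) = (\<Sum>q\<in>B. \<Sum>t\<in>A. g (t,q))"
proof -
  have "(\<Sum>t\<in>A. \<Sum>q\<in>B. g (t,q)) = (\<Sum>(t,q)\<in>A\<times>B. g (t,q))" by (rule sum.cartesian_product)
  moreover have "(\<Sum>t\<in>A. \<Sum>q\<in>B. g (t,q)) = (\<Sum>q\<in>B. \<Sum>t\<in>A. g (t,q))" by (rule sum.swap)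
  ultimately show ?thesis by simp
qed

lemma G_bound:
  fixes X :: "complex mat list" and y :: "complex vec"
  assumes XC: "\<forall>k<length X. X ! k \<in> carrier_mat (m*n) (m*n)"
    and y: "y \<in> carrier_vec (m*n)"
  shows "u \<in> carrier_vec (m*n) \<Longrightarrow>
    (\<Sum>t\<in>Idx n (length X) l. (cmod (sesq y (we3 m n X t) u))\<^sup>2)
      \<le> real n * vnorm2 y * (real n * (col_norm m n X)\<^sup>2)^l * vnorm2 u"
proof (induction l arbitrary: u)
  case 0
  have inj: "inj (\<lambda>(a::nat,b::nat). ([a],[b],[]::nat list))" by (auto simp: inj_def)
  have "(\<Sum>t\<in>Idx n (length X) 0. (cmod (sesq y (we3 m n X t) u))\<^sup>2)
     = (\<Sum>p\<in>{..<n}\<times>{..<n}. (cmod (sesq y (we3 m n X ((\<lambda>(a,b). ([a],[b],[])) p)) u))\<^sup>2)"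
    unfolding idx0 by (rule sum.reindex[OF inj_on_subset[OF inj subset_UNIV], unfolded comp_def])
  also have "\<dots> = (\<Sum>a<n. \<Sum>b<n. (cmod (sesq y (kron_unit m n a b) u))\<^sup>2)"
    by (simp add: sum.cartesian_product we3_def split_def)
  also have "\<dots> \<le> (\<Sum>a<n. \<Sum>b<n. vnorm2 y * vnorm2 (kron_unit m n a b *\<^sub>v u))"
    by (intro sum_mono sesq_bound) (use y in simp)
  also have "\<dots> = vnorm2 y * (\<Sum>a<n. \<Sum>b<n. vnorm2 (kron_unit m n a b *\<^sub>v u))"
    by (simp add: sum_distrib_left)
  also have "\<dots> = real n * vnorm2 y * (real n * (col_norm m n X)\<^sup>2)^0 * vnorm2 u"
    using kron_sum[OF "0.prems"] by simp
  finally show ?case .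
next
  case (Suc l)
  define d where "d = length X"
  define c where "c = col_norm m n X"
  define C where "C = real n * vnorm2 y * (real n * c\<^sup>2)^l"
  have C0: "C \<ge> 0" unfolding C_def by (simp add: vnorm2_nonneg)
  let ?P = "{..<n}\<times>{..<n}\<times>{..<d}"
  let ?f = "\<lambda>t. (cmod (sesq y (we3 m n X t) u))\<^sup>2"
  have "(\<Sum>t\<in>Idx n (length X) (Suc l). ?f t) = (\<Sum>p\<in>Idx n d l \<times> ?P. ?f (snoc3 p))"
    unfolding idxSuc d_def by (rule sum.reindex[OF inj_on_subset[OF snoc3_inj subset_UNIV], unfolded comp_def])
  also have "\<dots> = (\<Sum>p\<in>Idx n d l \<times> ?P. (case p of (t,(a,b,w)) \<Rightarrow>
       (cmod (sesq y (we3 m n X t) (X!w *\<^sub>v (kron_unit m n a b *\<^sub>v u))))\<^sup>2))"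
  proof (rule sum.cong[OF refl])
    fix p assume p: "p \<in> Idx n d l \<times> ?P"
    obtain \<alpha> \<beta> \<omega> a b w where pp: "p = ((\<alpha>,\<beta>,\<omega>),(a,b,w))" by (metis prod.exhaust)
    from p pp have l: "length \<alpha> = Suc (length \<omega>)" "length \<beta> = Suc (length \<omega>)"
      and so: "set \<omega> \<subseteq> {..<length X}" and w: "w < length X"
      unfolding Idx_def fock_index_def d_def by auto
    have Wc: "word_eval m n X \<alpha> \<beta> \<omega> \<in> carrier_mat (m*n) (m*n)" by (rule we_carrier[OF XC so])
    have Xw: "X!w \<in> carrier_mat (m*n) (m*n)" using XC w by simp
    have "we3 m n X (snoc3 p) = word_eval m n X \<alpha> \<beta> \<omega> * X!w * kron_unit m n a b"
      unfolding pp we3_def snoc3_def using we_snoc[OF XC w so l] by simp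
    then show "?f (snoc3 p) = (case p of (t,(a,b,w)) \<Rightarrow>
       (cmod (sesq y (we3 m n X t) (X!w *\<^sub>v (kron_unit m n a b *\<^sub>v u))))\<^sup>2)"
      using sesq_assoc3[OF Wc Xw kron_unit_carrier Suc.prems] pp by (simp add: we3_def)
  qed
  also have "\<dots> = (\<Sum>q\<in>?P. \<Sum>t\<in>Idx n d l. (case q of (a,b,w) \<Rightarrow>
       (cmod (sesq y (we3 m n X t) (X!w *\<^sub>v (kron_unit m n a b *\<^sub>v u))))\<^sup>2))"
    by (subst sum_prod2) (simp add: split_def)
  also have "\<dots> \<le> (\<Sum>q\<in>?P. (case q of (a,b,w) \<Rightarrow> C * vnorm2 (X!w *\<^sub>v (kron_unit m n a b *\<^sub>v u))))"
  proof (rule sum_mono)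
    fix q assume q: "q \<in> ?P"
    obtain a b w where qq: "q = (a,b,w)" by (metis prod.exhaust)
    have "X!w *\<^sub>v (kron_unit m n a b *\<^sub>v u) \<in> carrier_vec (m*n)"
      using XC q qq d_def Suc.prems by (auto intro!: mult_mat_vec_carrier[of _ "m*n" "m*n"])
    from Suc.IH[OF this] show "(\<Sum>t\<in>Idx n d l. (case q of (a,b,w) \<Rightarrow>
       (cmod (sesq y (we3 m n X t) (X!w *\<^sub>v (kron_unit m n a b *\<^sub>v u))))\<^sup>2))
       \<le> (case q of (a,b,w) \<Rightarrow> C * vnorm2 (X!w *\<^sub>v (kron_unit m n a b *\<^sub>v u)))"
      unfolding qq C_def c_def d_def by simp
  qed
  also have "\<dots> = C * (\<Sum>a<n. \<Sum>b<n. \<Sum>w<d. vnorm2 (X!w *\<^sub>v (kron_unit m n a b *\<^sub>v u)))"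
    by (subst sum_prod3) (simp add: sum_distrib_left)
  also have "\<dots> \<le> C * (\<Sum>a<n. \<Sum>b<n. c\<^sup>2 * vnorm2 (kron_unit m n a b *\<^sub>v u))"
  proof (intro mult_left_mono[OF _ C0] sum_mono)
    fix a b assume "a \<in> {..<n}" "b \<in> {..<n}"
    have "kron_unit m n a b *\<^sub>v u \<in> carrier_vec (m*n)" by (rule mult_mat_vec_carrier[OF kron_unit_carrier Suc.prems])
    from col_norm_props(2)[OF XC this]
    show "(\<Sum>w<d. vnorm2 (X!w *\<^sub>v (kron_unit m n a b *\<^sub>v u))) \<le> c\<^sup>2 * vnorm2 (kron_unit m n a b *\<^sub>v u)"
      unfolding c_def d_def .
  qed
  also have "\<dots> = C * c\<^sup>2 * real n * vnorm2 u"
    using kron_sum[OF Suc.prems] by (simp add: sum_distrib_left[symmetric] mult.assoc)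
  also have "\<dots> = real n * vnorm2 y * (real n * (col_norm m n X)\<^sup>2)^Suc l * vnorm2 u"
    unfolding C_def c_def by (simp add: algebra_simps)
  finally show ?case .
qed

theorem mainTheorem8:
  fixes m n d :: nat and X :: "complex mat list" and y v :: "complex vec"
  assumes "length X = d"
    and "\<forall>k<d. X ! k \<in> carrier_mat (m*n) (m*n)"
    and "y \<in> carrier_vec (m*n)" and "v \<in> carrier_vec (m*n)"
    and "col_norm m n X < 1 / sqrt (real n)"
  shows "\<exists>L. bounded_linear_functional_on (fock_index n d) L \<and>
           (\<forall>b\<in>fock_index n d. L (basis_vec b) =
              (case b of (\<alpha>, \<beta>, \<omega>) \<Rightarrow> sesq y (word_eval m n X \<alpha> \<beta> \<omega>) v))"
proof -
  note dX = assms(1)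
  have XC: "\<forall>k<length X. X ! k \<in> carrier_mat (m*n) (m*n)" using assms(1,2) by simp
  note y = assms(3) and v = assms(4)
  define I where "I = fock_index n d"
  define c0 where "c0 b = sesq y (we3 m n X b) v" for b
  define f where "f x = (cmod (c0 x))\<^sup>2" for x
  define cn where "cn = col_norm m n X"
  define \<rho> where "\<rho> = real n * cn\<^sup>2"
  define C0 where "C0 = real n * vnorm2 y * vnorm2 v"
  have cn0: "cn \<ge> 0" unfolding cn_def by (rule col_norm_props(1)[OF XC])
  have \<rho>0: "\<rho> \<ge> 0" unfolding \<rho>_def by simp
  have \<rho>1: "\<rho> < 1"
  proof (cases "n = 0")
    case True then show ?thesis unfolding \<rho>_def by simp
  next
    case False
    then have np: "real n > 0" by simp
    have "cn < 1 / sqrt (real n)" using assms(5) cn_def by simp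
    then have "cn\<^sup>2 < (1 / sqrt (real n))\<^sup>2" using cn0 by (intro power_strict_mono) auto
    then have "cn\<^sup>2 < 1 / real n" using np by (simp add: power_divide)
    then show ?thesis unfolding \<rho>_def using np by (simp add: field_simps)
  qed
  have C00: "C0 \<ge> 0" unfolding C0_def by (simp add: vnorm2_nonneg)
  have Gb: "sum f (Idx n d l) \<le> C0 * \<rho>^l" for l
    using G_bound[OF XC y v, of l] unfolding f_def c0_def C0_def \<rho>_def cn_def dX
    by (simp add: algebra_simps)
  have summ: "f summable_on I"
  proof (rule nonneg_bdd_above_summable_on)
    show "\<And>x. x \<in> I \<Longrightarrow> 0 \<le> f x" unfolding f_def by simp
    show "bdd_above (sum f ` {F. F \<subseteq> I \<and> finite F})"
    proof (rule bdd_aboveI2)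
      fix F assume F: "F \<in> {F. F \<subseteq> I \<and> finite F}"
      define M where "M = (\<Sum>t\<in>F. length (snd (snd t)))"
      define U where "U = (\<Union>l\<in>{..<Suc M}. Idx n d l)"
      have fU: "finite U" unfolding U_def by (simp add: finite_Idx)
      have FU: "F \<subseteq> U"
      proof
        fix t assume t: "t \<in> F"
        have "length (snd (snd t)) \<le> M" unfolding M_def by (rule member_le_sum) (use F t in auto)
        then show "t \<in> U" using F t unfolding U_def Idx_def I_def by auto
      qed
      have "sum f F \<le> sum f U" by (rule sum_mono2[OF fU FU]) (simp add: f_def)
      also have "sum f U = (\<Sum>l<Suc M. sum f (Idx n d l))"
        unfolding U_def by (rule sum.UNION_disjoint) (auto simp: finite_Idx, auto simp: Idx_def)
      also have "\<dots> \<le> (\<Sum>l<Suc M. C0 * \<rho>^l)" by (rule sum_mono) (rule Gb)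
      also have "\<dots> = C0 * (\<Sum>l<Suc M. \<rho>^l)" by (rule sum_distrib_left[symmetric])
      also have "\<dots> \<le> C0 * (1 / (1 - \<rho>))"
      proof (rule mult_left_mono[OF _ C00])
        have "(\<Sum>l<Suc M. \<rho>^l) = (1 - \<rho>^Suc M) / (1 - \<rho>)" using \<rho>1 by (simp only: sum_gp_strict) simp
        also have "\<dots> \<le> 1 / (1 - \<rho>)" using \<rho>0 \<rho>1 by (intro divide_right_mono) auto
        finally show "(\<Sum>l<Suc M. \<rho>^l) \<le> 1 / (1 - \<rho>)" .
      qed
      finally show "sum f F \<le> C0 * (1 / (1 - \<rho>))" .
    qed
  qed
  have cs: "(\<lambda>x. (cmod (c0 x))\<^sup>2) summable_on I" using summ unfolding f_def .
  from ell2_functional[OF cs]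
  have L: "bounded_linear_functional_on I (\<lambda>g. infsum (\<lambda>x. g x * c0 x) I)"
    and B: "\<forall>b\<in>I. infsum (\<lambda>x. basis_vec b x * c0 x) I = c0 b" by auto
  have ceq: "c0 b = (case b of (\<alpha>, \<beta>, \<omega>) \<Rightarrow> sesq y (word_eval m n X \<alpha> \<beta> \<omega>) v)" for b
    unfolding c0_def we3_def by (cases b) simp
  show ?thesis
    using L B ceq unfolding I_def by auto
qed

end
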